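(* For every $\theta\in\Theta$ and $n\ge1$ with $P_\theta(\theta\in\hat\Theta_{1-\varepsilon}(Y^{(n)}))>0$, $$P_\theta\Big(\theta\in\bigcap_{m>n}\hat\Theta_{1-\varepsilon}(Y^{(m)})\ \Big|\ \theta\in\hat\Theta_{1-\varepsilon}(Y^{(n)})\Big)\ge1-\varepsilon .$$
   Context: Let $Y^{(\infty)}=(Y_1,Y_2,\ldots)$ have joint distribution $P_\theta$, $\theta\in\Theta\subseteq\mathbb{R}^p$; $Y^{(n)}=(Y_1,\ldots,Y_n)$ has density $p_n(y^{(n)};\theta)$, strictly positive on a support not depending on $\theta$, forming a consistent family in $n$. Let $\pi$ be a strictly positive probability density on $\Theta$, $q_n(y^{(n)})=\int_\Theta p_n(y^{(n)};\theta)\pi(\theta)d\theta$, and for $0<\varepsilon<1$ let Robbins' region be $\hat\Theta_{1-\varepsilon}(y^{(n)})=\{\theta\in\Theta:p_n(y^{(n)};\theta)\ge\varepsilon q_n(y^{(n)})\}$. *)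

theory Defs
  imports "HOL-Probability.Probability"
begin

definition obs :: "(nat \<Rightarrow> 'w \<Rightarrow> 'a) \<Rightarrow> nat \<Rightarrow> 'w \<Rightarrow> (nat \<Rightarrow> 'a)" where
  "obs Y n \<omega> = (\<lambda>i\<in>{..<n}. Y i \<omega>)"

definition mixdens :: "'b::euclidean_space set \<Rightarrow> ('b \<Rightarrow> real) \<Rightarrow> ('y \<Rightarrow> 'b \<Rightarrow> real) \<Rightarrow> 'y \<Rightarrow> ennreal" where
  "mixdens \<Theta> \<pi> pn y = (\<integral>\<^sup>+\<theta>\<in>\<Theta>. ennreal (pn y \<theta> * \<pi> \<theta>) \<partial>lborel)"

definition robbins_region :: "'b::euclidean_space set \<Rightarrow> ('b \<Rightarrow> real) \<Rightarrow> ('y \<Rightarrow> 'b \<Rightarrow> real) \<Rightarrow> real \<Rightarrow> 'y \<Rightarrow> 'b set" where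
  "robbins_region \<Theta> \<pi> pn \<epsilon> y = {\<theta>\<in>\<Theta>. ennreal (pn y \<theta>) \<ge> ennreal \<epsilon> * mixdens \<Theta> \<pi> pn y}"

end

theory Submission
  imports Defs
begin

theorem mainTheorem9:
  fixes \<Theta> :: "'b::euclidean_space set"
    and A :: "'a measure"
    and M0 :: "'w measure"
    and P :: "'b \<Rightarrow> 'w measure"
    and Y :: "nat \<Rightarrow> 'w \<Rightarrow> 'a"
    and \<nu> :: "nat \<Rightarrow> (nat \<Rightarrow> 'a) measure"
    and S :: "nat \<Rightarrow> (nat \<Rightarrow> 'a) set"
    and p :: "nat \<Rightarrow> (nat \<Rightarrow> 'a) \<Rightarrow> 'b \<Rightarrow> real"
    and \<pi> :: "'b \<Rightarrow> real"
    and \<epsilon> :: real and \<theta> :: 'b and n :: nat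
  assumes Theta_borel: "\<Theta> \<in> sets borel"
    and P_prob: "\<And>t. t \<in> \<Theta> \<Longrightarrow> prob_space (P t)"
    and P_sets: "\<And>t. t \<in> \<Theta> \<Longrightarrow> sets (P t) = sets M0"
    and Y_meas: "\<And>i. Y i \<in> measurable M0 A"
    and nu_sf: "\<And>m. sigma_finite_measure (\<nu> m)"
    and nu_sets: "\<And>m. sets (\<nu> m) = sets (PiM {..<m} (\<lambda>_. A))"
    and p_meas: "\<And>m. (\<lambda>(y, t). p m y t) \<in>
                   borel_measurable (PiM {..<m} (\<lambda>_. A) \<Otimes>\<^sub>M restrict_space lborel \<Theta>)"
    and S_sets: "\<And>m. S m \<in> sets (PiM {..<m} (\<lambda>_. A))"
    and p_pos: "\<And>m y t. t \<in> \<Theta> \<Longrightarrow> y \<in> S m \<Longrightarrow> p m y t > 0"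
    and p_zero: "\<And>m y t. t \<in> \<Theta> \<Longrightarrow> y \<in> space (PiM {..<m} (\<lambda>_. A)) \<Longrightarrow> y \<notin> S m \<Longrightarrow> p m y t = 0"
    and p_density: "\<And>m t. t \<in> \<Theta> \<Longrightarrow>
                   distr (P t) (PiM {..<m} (\<lambda>_. A)) (obs Y m) = density (\<nu> m) (\<lambda>y. ennreal (p m y t))"
    and pi_meas: "\<pi> \<in> borel_measurable (restrict_space lborel \<Theta>)"
    and pi_pos: "\<And>t. t \<in> \<Theta> \<Longrightarrow> \<pi> t > 0"
    and pi_int: "(\<integral>\<^sup>+t\<in>\<Theta>. ennreal (\<pi> t) \<partial>lborel) = 1"
    and eps: "0 < \<epsilon>" "\<epsilon> < 1"
    and theta: "\<theta> \<in> \<Theta>"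
    and n: "n \<ge> 1"
    and pos: "\<P>(\<omega> in P \<theta>. \<theta> \<in> robbins_region \<Theta> \<pi> (p n) \<epsilon> (obs Y n \<omega>)) > 0"
  shows "cond_prob (P \<theta>)
           (\<lambda>\<omega>. \<forall>m>n. \<theta> \<in> robbins_region \<Theta> \<pi> (p m) \<epsilon> (obs Y m \<omega>))
           (\<lambda>\<omega>. \<theta> \<in> robbins_region \<Theta> \<pi> (p n) \<epsilon> (obs Y n \<omega>)) \<ge> 1 - \<epsilon>"
proof -
  define PM where "PM = (\<lambda>m. PiM {..<m} (\<lambda>_::nat. A))"
  define L where "L = restrict_space lborel \<Theta>"
  define q where "q = (\<lambda>m y. mixdens \<Theta> \<pi> (p m) y)"
  have spL: "space L = \<Theta>" unfolding L_def by (simp add: space_restrict_space)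
  have sfL: "sigma_finite_measure L" unfolding L_def
    by (rule sigma_finite_measure_restrict_space) (auto simp: Theta_borel lborel.sigma_finite_measure_axioms)
  have nu_sp: "\<And>m. space (\<nu> m) = space (PM m)" unfolding PM_def using nu_sets by (rule sets_eq_imp_space_eq)
  have nu_meas: "\<And>m N. measurable (\<nu> m) N = measurable (PM m) N" unfolding PM_def
    by (rule measurable_cong_sets) (auto simp: nu_sets)
  have nu_sets': "\<And>m. sets (\<nu> m) = sets (PM m)" unfolding PM_def by (rule nu_sets)
  have P_sp: "\<And>t. t \<in> \<Theta> \<Longrightarrow> space (P t) = space M0" using P_sets by (rule sets_eq_imp_space_eq)
  have obs_meas: "\<And>m. obs Y m \<in> measurable M0 (PM m)"
    unfolding PM_def obs_def by (rule measurable_restrict) (simp add: Y_meas)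
  have p_nonneg: "\<And>m y t. t \<in> \<Theta> \<Longrightarrow> y \<in> space (PM m) \<Longrightarrow> p m y t \<ge> 0"
    using p_pos p_zero unfolding PM_def by (metis less_imp_le order_refl)
  have pm: "\<And>m. (\<lambda>(y,t). ennreal (p m y t * \<pi> t)) \<in> borel_measurable (PM m \<Otimes>\<^sub>M L)"
  proof -
    fix m
    have 1: "(\<lambda>(y, t). p m y t) \<in> borel_measurable (PM m \<Otimes>\<^sub>M L)" using p_meas unfolding PM_def L_def .
    have 2: "(\<lambda>x. \<pi> (snd x)) \<in> borel_measurable (PM m \<Otimes>\<^sub>M L)"
      using pi_meas unfolding L_def by measurable
    have "(\<lambda>x. ennreal ((case x of (y,t) \<Rightarrow> p m y t) * \<pi> (snd x))) \<in> borel_measurable (PM m \<Otimes>\<^sub>M L)"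
      using 1 2 by measurable
    then show "?thesis m" by (simp add: case_prod_beta')
  qed
  have q_alt: "\<And>m y. q m y = (\<integral>\<^sup>+t. ennreal (p m y t * \<pi> t) \<partial>L)"
    unfolding q_def mixdens_def L_def
    by (subst nn_integral_restrict_space) (auto simp: Theta_borel)
  have q_meas: "\<And>m. q m \<in> borel_measurable (PM m)"
  proof -
    fix m
    interpret sigma_finite_measure L by (rule sfL)
    show "?thesis m" unfolding q_alt using pm[of m] by (rule borel_measurable_nn_integral)
  qed
  have fmeas: "\<And>k t. t \<in> \<Theta> \<Longrightarrow> (\<lambda>y. ennreal (p k y t)) \<in> borel_measurable (PM k)"
  proof -
    fix k t assume t: "t \<in> \<Theta>"
    have "(\<lambda>y. (y,t)) \<in> measurable (PM k) (PM k \<Otimes>\<^sub>M L)"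
      using t spL by (auto intro!: measurable_Pair)
    moreover have "(\<lambda>(y, t). p k y t) \<in> borel_measurable (PM k \<Otimes>\<^sub>M L)" using p_meas unfolding PM_def L_def .
    ultimately have "(\<lambda>y. (\<lambda>(y, t). p k y t) (y,t)) \<in> borel_measurable (PM k)" by (rule measurable_compose)
    then show "?thesis k t" by simp
  qed
  have dens: "\<And>k C t. C \<in> sets (PM k) \<Longrightarrow> t \<in> \<Theta> \<Longrightarrow>
     emeasure (P t) (obs Y k -` C \<inter> space M0) = (\<integral>\<^sup>+y. ennreal (p k y t) * indicator C y \<partial>\<nu> k)"
  proof -
    fix k C t assume C: "C \<in> sets (PM k)" and t: "t \<in> \<Theta>"
    have fm: "(\<lambda>y. ennreal (p k y t)) \<in> borel_measurable (\<nu> k)" using fmeas[OF t] by (simp add: nu_meas)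
    have "(\<integral>\<^sup>+y. ennreal (p k y t) * indicator C y \<partial>\<nu> k) = emeasure (density (\<nu> k) (\<lambda>y. ennreal (p k y t))) C"
      by (rule emeasure_density[symmetric]) (use fm C nu_sets' in auto)
    also have "\<dots> = emeasure (distr (P t) (PM k) (obs Y k)) C"
      using p_density[OF t, of k] unfolding PM_def by simp
    also have "\<dots> = emeasure (P t) (obs Y k -` C \<inter> space M0)"
      using C obs_meas[of k] P_sp[OF t] measurable_cong_sets[OF P_sets[OF t] refl, of "PM k"]
      by (subst emeasure_distr) auto
    finally show "?thesis k C t" by simp
  qed
  define H where "H = (\<lambda>k C t. \<integral>\<^sup>+y. ennreal (p k y t * \<pi> t) * indicator C y \<partial>\<nu> k)"
  have pmC: "\<And>k C. C \<in> sets (PM k) \<Longrightarrow>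
     (\<lambda>(y,t). ennreal (p k y t * \<pi> t) * indicator C y) \<in> borel_measurable (\<nu> k \<Otimes>\<^sub>M L)"
  proof -
    fix k C assume C: "C \<in> sets (PM k)"
    have "(\<lambda>x. (case x of (y,t) \<Rightarrow> ennreal (p k y t * \<pi> t)) * indicator C (fst x)) \<in> borel_measurable (PM k \<Otimes>\<^sub>M L)"
      using pm[of k] C by measurable
    then have X: "(\<lambda>(y,t). ennreal (p k y t * \<pi> t) * indicator C y) \<in> borel_measurable (PM k \<Otimes>\<^sub>M L)"
      by (simp add: case_prod_beta')
    moreover have eqs: "sets (\<nu> k \<Otimes>\<^sub>M L) = sets (PM k \<Otimes>\<^sub>M L)"
      by (rule sets_pair_measure_cong) (auto simp: nu_sets')
    show "?thesis k C" using X unfolding measurable_cong_sets[OF eqs refl] .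
  qed
  have mixA: "\<And>k C. C \<in> sets (PM k) \<Longrightarrow> (\<integral>\<^sup>+y. q k y * indicator C y \<partial>\<nu> k) = (\<integral>\<^sup>+t. H k C t \<partial>L)"
  proof -
    fix k C assume C: "C \<in> sets (PM k)"
    interpret pair_sigma_finite "\<nu> k" L
      unfolding pair_sigma_finite_def using nu_sf sfL by auto
    have "\<And>y. q k y * indicator C y = (\<integral>\<^sup>+t. ennreal (p k y t * \<pi> t) * indicator C y \<partial>L)"
      unfolding q_alt by (case_tac "y \<in> C") auto
    then have "(\<integral>\<^sup>+y. q k y * indicator C y \<partial>\<nu> k) = (\<integral>\<^sup>+y. \<integral>\<^sup>+t. ennreal (p k y t * \<pi> t) * indicator C y \<partial>L \<partial>\<nu> k)"
      by simp
    also have "\<dots> = (\<integral>\<^sup>+t. \<integral>\<^sup>+y. ennreal (p k y t * \<pi> t) * indicator C y \<partial>\<nu> k \<partial>L)"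
      using Fubini'[of "\<lambda>y t. ennreal (p k y t * \<pi> t) * indicator C y"] pmC[OF C] by simp
    finally show "?thesis k C" unfolding H_def .
  qed
  have mixB: "\<And>k C. C \<in> sets (PM k) \<Longrightarrow> H k C \<in> borel_measurable L"
  proof -
    fix k C assume C: "C \<in> sets (PM k)"
    interpret sigma_finite_measure "\<nu> k" by (rule nu_sf)
    have "(\<lambda>(t,y). ennreal (p k y t * \<pi> t) * indicator C y) \<in> borel_measurable (L \<Otimes>\<^sub>M \<nu> k)"
      using pmC[OF C] measurable_pair_swap_iff by force
    then show "?thesis k C" unfolding H_def by (rule borel_measurable_nn_integral)
  qed
  have mixC: "\<And>k C t. C \<in> sets (PM k) \<Longrightarrow> t \<in> \<Theta> \<Longrightarrow>
      H k C t = ennreal (\<pi> t) * emeasure (P t) (obs Y k -` C \<inter> space M0)"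
  proof -
    fix k C t assume C: "C \<in> sets (PM k)" and t: "t \<in> \<Theta>"
    have fm: "(\<lambda>y. ennreal (p k y t)) \<in> borel_measurable (\<nu> k)"
    proof -
      have "(\<lambda>y. (y,t)) \<in> measurable (PM k) (PM k \<Otimes>\<^sub>M L)"
        using t spL by (auto intro!: measurable_Pair)
      moreover have "(\<lambda>(y, t). p k y t) \<in> borel_measurable (PM k \<Otimes>\<^sub>M L)" using p_meas unfolding PM_def L_def .
      ultimately have "(\<lambda>y. (\<lambda>(y, t). p k y t) (y,t)) \<in> borel_measurable (PM k)" by (rule measurable_compose)
      then have "(\<lambda>y. ennreal (p k y t)) \<in> borel_measurable (PM k)" by simp
      then show ?thesis by (simp add: nu_meas)
    qed
    have "H k C t = (\<integral>\<^sup>+y. ennreal (\<pi> t) * (ennreal (p k y t) * indicator C y) \<partial>\<nu> k)"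
      unfolding H_def
      by (rule nn_integral_cong) (simp add: ennreal_mult'' p_nonneg t nu_sp mult.commute mult.left_commute pi_pos less_imp_le)
    also have "\<dots> = ennreal (\<pi> t) * (\<integral>\<^sup>+y. ennreal (p k y t) * indicator C y \<partial>\<nu> k)"
      by (rule nn_integral_cmult) (use fm C nu_sets' in measurable)
    also have "(\<integral>\<^sup>+y. ennreal (p k y t) * indicator C y \<partial>\<nu> k) = emeasure (density (\<nu> k) (\<lambda>y. ennreal (p k y t))) C"
      by (rule emeasure_density[symmetric]) (use fm C nu_sets' in auto)
    also have "\<dots> = emeasure (distr (P t) (PM k) (obs Y k)) C"
      using p_density[OF t, of k] unfolding PM_def by simp
    also have "\<dots> = emeasure (P t) (obs Y k -` C \<inter> space M0)"
      using C obs_meas[of k] P_sp[OF t] measurable_cong_sets[OF P_sets[OF t] refl, of "PM k"]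
      by (subst emeasure_distr) auto
    finally show "?thesis k C t" .
  qed
  define G where "G = (\<lambda>m. {y \<in> space (PM m). ennreal \<epsilon> * q m y \<le> ennreal (p m y \<theta>)})"
  have G_sets: "\<And>m. G m \<in> sets (PM m)"
  proof -
    fix m
    have "(\<lambda>y. ennreal \<epsilon> * q m y) \<in> borel_measurable (PM m)" using q_meas[of m] by measurable
    moreover have "(\<lambda>y. ennreal (p m y \<theta>)) \<in> borel_measurable (PM m)" using fmeas[OF theta] .
    ultimately show "?thesis m" unfolding G_def by (rule borel_measurable_le)
  qed
  have cond_iff: "\<And>m \<omega>. \<omega> \<in> space M0 \<Longrightarrow>
      (\<theta> \<in> robbins_region \<Theta> \<pi> (p m) \<epsilon> (obs Y m \<omega>)) = (obs Y m \<omega> \<in> G m)"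
    using measurable_space[OF obs_meas] theta unfolding robbins_region_def G_def q_def by auto
  have restr: "\<And>j k \<omega>. j \<le> k \<Longrightarrow> obs Y j \<omega> = restrict (obs Y k \<omega>) {..<j}"
    by (auto simp: obs_def restrict_def fun_eq_iff)
  define C where "C = (\<lambda>k. {y \<in> space (PM k). n < k \<and> restrict y {..<n} \<in> G n \<and> y \<notin> G k \<and>
      (\<forall>j. n < j \<and> j < k \<longrightarrow> restrict y {..<j} \<in> G j)})"
  have C_sets: "\<And>k. C k \<in> sets (PM k)"
  proof -
    fix k
    have rm: "\<And>j. j \<le> k \<Longrightarrow> (\<lambda>y. restrict y {..<j}) \<in> measurable (PM k) (PM j)"
      unfolding PM_def by (rule measurable_restrict_subset) auto
    have pre: "\<And>j. j \<le> k \<Longrightarrow> (\<lambda>y. restrict y {..<j}) -` G j \<inter> space (PM k) \<in> sets (PM k)"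
      using rm G_sets by (rule measurable_sets)
    show "C k \<in> sets (PM k)"
    proof (cases "n < k")
      case False then have "C k = {}" unfolding C_def by auto
      then show ?thesis by simp
    next
      case True
      have eq: "C k = ((\<lambda>y. restrict y {..<n}) -` G n \<inter> space (PM k)) \<inter> (space (PM k) - G k) \<inter>
          (space (PM k) \<inter> (\<Inter>j\<in>{n<..<k}. (\<lambda>y. restrict y {..<j}) -` G j \<inter> space (PM k)))"
        using True unfolding C_def by auto
      have a: "(\<lambda>y. restrict y {..<n}) -` G n \<inter> space (PM k) \<in> sets (PM k)" using True by (intro pre) simp
      have b: "space (PM k) - G k \<in> sets (PM k)" using G_sets by auto
      have c: "(space (PM k) \<inter> (\<Inter>j\<in>{n<..<k}. (\<lambda>y. restrict y {..<j}) -` G j \<inter> space (PM k))) \<in> sets (PM k)"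
      proof (cases "{n<..<k} = {}")
        case True then show ?thesis by simp
      next
        case False
        have "(\<Inter>j\<in>{n<..<k}. (\<lambda>y. restrict y {..<j}) -` G j \<inter> space (PM k)) \<in> sets (PM k)"
          using False by (intro sets.finite_INT) (auto intro: pre)
        then show ?thesis by auto
      qed
      show ?thesis unfolding eq using a b c by auto
    qed
  qed
  define F where "F = (\<lambda>k. obs Y k -` C k \<inter> space M0)"
  define E where "E = obs Y n -` G n \<inter> space M0"
  have F_sets: "\<And>k. F k \<in> sets M0" unfolding F_def using obs_meas C_sets by (rule measurable_sets)
  have E_sets: "E \<in> sets M0" unfolding E_def using obs_meas G_sets by (rule measurable_sets)
  have F_sub: "\<And>k. F k \<subseteq> E"
  proof
    fix k \<omega> assume w: "\<omega> \<in> F k"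
    then have nk: "n < k" and r: "restrict (obs Y k \<omega>) {..<n} \<in> G n" and sp: "\<omega> \<in> space M0"
      unfolding F_def C_def by auto
    have "obs Y n \<omega> = restrict (obs Y k \<omega>) {..<n}" using nk by (intro restr) simp
    then show "\<omega> \<in> E" using r sp unfolding E_def by simp
  qed
  have F_disj0: "\<And>k k'. k < k' \<Longrightarrow> F k \<inter> F k' = {}"
  proof (rule ccontr)
    fix k k' assume kk: "k < k'" and ne: "F k \<inter> F k' \<noteq> {}"
    then obtain \<omega> where w1: "\<omega> \<in> F k" and w2: "\<omega> \<in> F k'" by auto
    from w1 have nk: "n < k" and nG: "obs Y k \<omega> \<notin> G k" unfolding F_def C_def by auto
    from w2 kk nk have "restrict (obs Y k' \<omega>) {..<k} \<in> G k" unfolding F_def C_def by auto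
    moreover have "obs Y k \<omega> = restrict (obs Y k' \<omega>) {..<k}" using kk by (intro restr) simp
    ultimately show False using nG by simp
  qed
  have F_disj: "disjoint_family F"
    unfolding disjoint_family_on_def
    by (metis F_disj0 Int_commute linorder_neqE_nat)
  define Bad where "Bad = {\<omega> \<in> space M0. \<theta> \<in> robbins_region \<Theta> \<pi> (p n) \<epsilon> (obs Y n \<omega>) \<and>
      \<not> (\<forall>m>n. \<theta> \<in> robbins_region \<Theta> \<pi> (p m) \<epsilon> (obs Y m \<omega>))}"
  have Bad_eq: "Bad = (\<Union>k. F k)"
  proof
    show "(\<Union>k. F k) \<subseteq> Bad"
    proof
      fix \<omega> assume "\<omega> \<in> (\<Union>k. F k)"
      then obtain k where w: "\<omega> \<in> F k" by auto
      then have sp: "\<omega> \<in> space M0" and nk: "n < k" and nG: "obs Y k \<omega> \<notin> G k" unfolding F_def C_def by auto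
      have "\<omega> \<in> E" using w F_sub by auto
      then have "obs Y n \<omega> \<in> G n" unfolding E_def by simp
      then show "\<omega> \<in> Bad" unfolding Bad_def using sp nk nG cond_iff[OF sp] by auto
    qed
  next
    show "Bad \<subseteq> (\<Union>k. F k)"
    proof
      fix \<omega> assume "\<omega> \<in> Bad"
      then have sp: "\<omega> \<in> space M0" and c0: "obs Y n \<omega> \<in> G n" and ex: "\<exists>m. n < m \<and> obs Y m \<omega> \<notin> G m"
        unfolding Bad_def using cond_iff[OF _] by auto
      define k where "k = (LEAST m. n < m \<and> obs Y m \<omega> \<notin> G m)"
      have k1: "n < k \<and> obs Y k \<omega> \<notin> G k" unfolding k_def by (rule LeastI_ex) (rule ex)
      have k2: "\<And>j. n < j \<Longrightarrow> j < k \<Longrightarrow> obs Y j \<omega> \<in> G j"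
        using not_less_Least[of _ "\<lambda>m. n < m \<and> obs Y m \<omega> \<notin> G m"] unfolding k_def by blast
      have "\<omega> \<in> F k" unfolding F_def C_def
        using sp k1 k2 c0 measurable_space[OF obs_meas sp, of k] restr[of _ k \<omega>, symmetric]
        by auto
      then show "\<omega> \<in> (\<Union>k. F k)" by auto
    qed
  qed
  have step1: "\<And>k. emeasure (P \<theta>) (F k) \<le> ennreal \<epsilon> * (\<integral>\<^sup>+t. H k (C k) t \<partial>L)"
  proof -
    fix k
    have qm: "(\<lambda>y. q k y * indicator (C k) y) \<in> borel_measurable (\<nu> k)"
      using q_meas[of k] C_sets[of k] unfolding nu_meas by measurable
    have "emeasure (P \<theta>) (F k) = (\<integral>\<^sup>+y. ennreal (p k y \<theta>) * indicator (C k) y \<partial>\<nu> k)"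
      unfolding F_def by (rule dens[OF C_sets theta])
    also have "\<dots> \<le> (\<integral>\<^sup>+y. ennreal \<epsilon> * (q k y * indicator (C k) y) \<partial>\<nu> k)"
    proof (rule nn_integral_mono)
      fix y assume "y \<in> space (\<nu> k)"
      show "ennreal (p k y \<theta>) * indicator (C k) y \<le> ennreal \<epsilon> * (q k y * indicator (C k) y)"
      proof (cases "y \<in> C k")
        case True
        then have "y \<in> space (PM k)" "y \<notin> G k" unfolding C_def by auto
        then have "ennreal (p k y \<theta>) \<le> ennreal \<epsilon> * q k y" unfolding G_def by auto
        then show ?thesis using True by simp
      qed simp
    qed
    also have "\<dots> = ennreal \<epsilon> * (\<integral>\<^sup>+y. q k y * indicator (C k) y \<partial>\<nu> k)"
      using qm by (rule nn_integral_cmult)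
    also have "\<dots> = ennreal \<epsilon> * (\<integral>\<^sup>+t. H k (C k) t \<partial>L)" using mixA[OF C_sets] by simp
    finally show "?thesis k" .
  qed
  have step2: "\<And>t. t \<in> \<Theta> \<Longrightarrow> (\<Sum>k. H k (C k) t) \<le> H n (G n) t"
  proof -
    fix t assume t: "t \<in> \<Theta>"
    have rs: "range F \<subseteq> sets (P t)" using F_sets P_sets[OF t] by auto
    have "(\<Sum>k. H k (C k) t) = (\<Sum>k. ennreal (\<pi> t) * emeasure (P t) (F k))"
      unfolding F_def using mixC[OF C_sets t] by simp
    also have "\<dots> = ennreal (\<pi> t) * emeasure (P t) (\<Union>k. F k)"
      using suminf_emeasure[OF rs F_disj] by simp
    also have "\<dots> \<le> ennreal (\<pi> t) * emeasure (P t) E"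
      using F_sub E_sets P_sets[OF t] by (intro mult_left_mono emeasure_mono) auto
    also have "\<dots> = H n (G n) t" unfolding E_def using mixC[OF G_sets t] by simp
    finally show "?thesis t" .
  qed
  define b where "b = (\<integral>\<^sup>+y. q n y * indicator (G n) y \<partial>\<nu> n)"
  have total: "emeasure (P \<theta>) Bad \<le> ennreal \<epsilon> * b"
  proof -
    have rs: "range F \<subseteq> sets (P \<theta>)" using F_sets P_sets[OF theta] by auto
    have "emeasure (P \<theta>) Bad = (\<Sum>k. emeasure (P \<theta>) (F k))"
      unfolding Bad_eq using suminf_emeasure[OF rs F_disj] by simp
    also have "\<dots> \<le> (\<Sum>k. ennreal \<epsilon> * (\<integral>\<^sup>+t. H k (C k) t \<partial>L))"
      by (intro suminf_le step1) auto
    also have "\<dots> = ennreal \<epsilon> * (\<Sum>k. (\<integral>\<^sup>+t. H k (C k) t \<partial>L))" by simp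
    also have "(\<Sum>k. (\<integral>\<^sup>+t. H k (C k) t \<partial>L)) = (\<integral>\<^sup>+t. (\<Sum>k. H k (C k) t) \<partial>L)"
      by (rule nn_integral_suminf[symmetric]) (rule mixB[OF C_sets])
    also have "\<dots> \<le> (\<integral>\<^sup>+t. H n (G n) t \<partial>L)"
      by (rule nn_integral_mono) (use step2 spL in auto)
    also have "\<dots> = b" unfolding b_def using mixA[OF G_sets] by simp
    finally show ?thesis by (simp add: mult_left_mono)
  qed
  define Gc where "Gc = space (PM n) - G n"
  have Gc_sets: "Gc \<in> sets (PM n)" unfolding Gc_def using G_sets by auto
  have split: "\<And>t. t \<in> \<Theta> \<Longrightarrow>
      emeasure (P t) (obs Y n -` G n \<inter> space M0) + emeasure (P t) (obs Y n -` Gc \<inter> space M0) = 1"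
  proof -
    fix t assume t: "t \<in> \<Theta>"
    interpret ps: prob_space "P t" by (rule P_prob[OF t])
    have s1: "obs Y n -` G n \<inter> space M0 \<in> sets (P t)"
      using measurable_sets[OF obs_meas G_sets] P_sets[OF t] by simp
    have s2: "obs Y n -` Gc \<inter> space M0 \<in> sets (P t)"
      using measurable_sets[OF obs_meas Gc_sets] P_sets[OF t] by simp
    have un: "(obs Y n -` G n \<inter> space M0) \<union> (obs Y n -` Gc \<inter> space M0) = space (P t)"
      using measurable_space[OF obs_meas] P_sp[OF t] unfolding Gc_def by auto
    have dj: "(obs Y n -` G n \<inter> space M0) \<inter> (obs Y n -` Gc \<inter> space M0) = {}"
      unfolding Gc_def by auto
    have "emeasure (P t) (obs Y n -` G n \<inter> space M0) + emeasure (P t) (obs Y n -` Gc \<inter> space M0)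
        = emeasure (P t) (space (P t))"
      using plus_emeasure[OF s1 s2 dj] un by simp
    then show "?thesis t" using ps.emeasure_space_1 by simp
  qed
  define c where "c = (\<integral>\<^sup>+y. q n y * indicator Gc y \<partial>\<nu> n)"
  define a where "a = emeasure (P \<theta>) E"
  define d where "d = emeasure (P \<theta>) (obs Y n -` Gc \<inter> space M0)"
  have ad: "a + d = 1" unfolding a_def d_def E_def using split[OF theta] .
  have piL: "(\<integral>\<^sup>+t. ennreal (\<pi> t) \<partial>L) = 1"
    using pi_int unfolding L_def by (subst nn_integral_restrict_space) (auto simp: Theta_borel)
  have bc: "b + c = 1"
  proof -
    have "b + c = (\<integral>\<^sup>+t. H n (G n) t \<partial>L) + (\<integral>\<^sup>+t. H n Gc t \<partial>L)"
      unfolding b_def c_def using mixA[OF G_sets] mixA[OF Gc_sets] by simp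
    also have "\<dots> = (\<integral>\<^sup>+t. H n (G n) t + H n Gc t \<partial>L)"
      by (rule nn_integral_add[symmetric]) (use mixB[OF G_sets] mixB[OF Gc_sets] in auto)
    also have "\<dots> = (\<integral>\<^sup>+t. ennreal (\<pi> t) \<partial>L)"
    proof (rule nn_integral_cong)
      fix t assume "t \<in> space L"
      then have t: "t \<in> \<Theta>" using spL by simp
      show "H n (G n) t + H n Gc t = ennreal (\<pi> t)"
        using mixC[OF G_sets t] mixC[OF Gc_sets t] split[OF t]
        by (simp add: distrib_left[symmetric])
    qed
    finally show ?thesis using piL by simp
  qed
  have dc: "d \<le> c"
  proof -
    have "d = (\<integral>\<^sup>+y. ennreal (p n y \<theta>) * indicator Gc y \<partial>\<nu> n)"
      unfolding d_def by (rule dens[OF Gc_sets theta])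
    also have "\<dots> \<le> c" unfolding c_def
    proof (rule nn_integral_mono)
      fix y assume "y \<in> space (\<nu> n)"
      show "ennreal (p n y \<theta>) * indicator Gc y \<le> q n y * indicator Gc y"
      proof (cases "y \<in> Gc")
        case True
        then have "y \<in> space (PM n)" "y \<notin> G n" unfolding Gc_def by auto
        then have "ennreal (p n y \<theta>) \<le> ennreal \<epsilon> * q n y" unfolding G_def by auto
        also have "\<dots> \<le> 1 * q n y" by (rule mult_right_mono) (use eps in auto)
        finally show ?thesis using True by simp
      qed simp
    qed
    finally show ?thesis .
  qed
  have ba: "b \<le> a"
  proof -
    have "c \<noteq> \<infinity>"
    proof
      assume "c = \<infinity>"
      then have "b + c = \<infinity>" by simp
      with bc show False by simp
    qed
    then have dfin: "d \<noteq> \<infinity>" using dc by (metis infinity_ennreal_def top.extremum_uniqueI)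
    have "b + d \<le> b + c" using dc by (rule add_left_mono)
    also have "\<dots> = a + d" using bc ad by simp
    finally show ?thesis using dfin by (simp add: ennreal_add_left_cancel_le add.commute[of _ d])
  qed
  interpret ps: prob_space "P \<theta>" by (rule P_prob[OF theta])
  have spT: "space (P \<theta>) = space M0" by (rule P_sp[OF theta])
  have Bad_sets: "Bad \<in> sets (P \<theta>)" unfolding Bad_eq using F_sets P_sets[OF theta] by auto
  have E_sets': "E \<in> sets (P \<theta>)" using E_sets P_sets[OF theta] by simp
  have Bad_sub: "Bad \<subseteq> E" unfolding Bad_eq using F_sub by auto
  have EQ: "{\<omega> \<in> space (P \<theta>). \<theta> \<in> robbins_region \<Theta> \<pi> (p n) \<epsilon> (obs Y n \<omega>)} = E"
    unfolding spT E_def using cond_iff by auto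
  have GQ: "{\<omega> \<in> space (P \<theta>). (\<forall>m>n. \<theta> \<in> robbins_region \<Theta> \<pi> (p m) \<epsilon> (obs Y m \<omega>)) \<and>
      \<theta> \<in> robbins_region \<Theta> \<pi> (p n) \<epsilon> (obs Y n \<omega>)} = E - Bad"
    unfolding spT E_def Bad_def using cond_iff by auto
  have mE: "measure (P \<theta>) E > 0" using pos EQ by simp
  have "ennreal (measure (P \<theta>) Bad) \<le> ennreal \<epsilon> * ennreal (measure (P \<theta>) E)"
  proof -
    have "ennreal (measure (P \<theta>) Bad) = emeasure (P \<theta>) Bad" by (simp add: ps.emeasure_eq_measure)
    also have "\<dots> \<le> ennreal \<epsilon> * b" by (rule total)
    also have "\<dots> \<le> ennreal \<epsilon> * a" using ba by (rule mult_left_mono) simp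
    also have "a = ennreal (measure (P \<theta>) E)" unfolding a_def by (simp add: ps.emeasure_eq_measure)
    finally show ?thesis .
  qed
  then have mB: "measure (P \<theta>) Bad \<le> \<epsilon> * measure (P \<theta>) E"
    using eps by (simp add: ennreal_mult''[symmetric] ennreal_le_iff)
  have mD: "measure (P \<theta>) (E - Bad) = measure (P \<theta>) E - measure (P \<theta>) Bad"
    using ps.finite_measure_Diff[OF E_sets' Bad_sets Bad_sub] .
  have "cond_prob (P \<theta>)
           (\<lambda>\<omega>. \<forall>m>n. \<theta> \<in> robbins_region \<Theta> \<pi> (p m) \<epsilon> (obs Y m \<omega>))
           (\<lambda>\<omega>. \<theta> \<in> robbins_region \<Theta> \<pi> (p n) \<epsilon> (obs Y n \<omega>))
        = (measure (P \<theta>) E - measure (P \<theta>) Bad) / measure (P \<theta>) E"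
    unfolding cond_prob_def using GQ EQ mD by simp
  also have "\<dots> \<ge> 1 - \<epsilon>"
    using mE mB by (simp add: field_simps)
  finally show ?thesis .
qed

end
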